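(* Let $(X,d)$ be a bicomplete quasi-pseudometric space. Let $J:X\to X$ be a continuous single-valued map such that $r\,d(x,y)\le d(Jx,Jy)$ for all $x,y\in X$, for some constant $r>0$. Let $F:X\to CB(X)$ be a set-valued map such that $$H(Fx,Fy)\le \alpha\big[d(Jx,Fx)+d(Jy,Fy)\big]\quad\text{for all }x,y\in X,$$ where $\alpha\in(0,1/2)$. If $J$ and $F$ have the approximate mix-point property, then $F$ has a $J$-fixed point, i.e. there is $x\in X$ with $Jx\in Fx$.
   Context: A quasi-pseudometric on a nonempty set $X$ is a map $d:X\times X\to[0,\infty)$ with $d(x,x)=0$ and $d(x,z)\le d(x,y)+d(y,z)$ for all $x,y,z$; it is $T_0$ if $d(x,y)=0=d(y,x)$ implies $x=y$. Write $d^s(x,y)=\max\{d(x,y),d(y,x)\}$. The space $(X,d)$ is bicomplete if $d$ is $T_0$ and the metric $d^s$ is complete. For $x\in X$ and nonempty $A\subseteq X$: $d(x,A)=\inf_{a\in A}d(x,a)$, $d(A,x)=\inf_{a\in A}d(a,x)$. For nonempty $A,B\subseteq X$: $H(A,B)=\max\{\sup_{a\in A}d(a,B),\ \sup_{b\in B}d(A,b)\}$. $CB(X)$ denotes the family of nonempty $d^s$-bounded, $\tau(d^s)$-closed subsets of $X$; continuity of $J$ is with respect to $\tau(d^s)$. $J$ and $F$ have the approximate mix-point property if $\inf_{x\in X}\sup_{y\in Fx}d^s(Jx,y)=0$. *)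

theory Defs
  imports "HOL-Analysis.Analysis"
begin

definition quasi_pseudometric :: "('a \<Rightarrow> 'a \<Rightarrow> real) \<Rightarrow> bool" where
  "quasi_pseudometric d \<longleftrightarrow> (\<forall>x y. 0 \<le> d x y) \<and> (\<forall>x. d x x = 0) \<and>
     (\<forall>x y z. d x z \<le> d x y + d y z)"

definition T0_qpm :: "('a \<Rightarrow> 'a \<Rightarrow> real) \<Rightarrow> bool" where
  "T0_qpm d \<longleftrightarrow> (\<forall>x y. d x y = 0 \<and> d y x = 0 \<longrightarrow> x = y)"

definition sym_dist :: "('a \<Rightarrow> 'a \<Rightarrow> real) \<Rightarrow> 'a \<Rightarrow> 'a \<Rightarrow> real" where
  "sym_dist d x y = max (d x y) (d y x)"

definition ds_complete :: "('a \<Rightarrow> 'a \<Rightarrow> real) \<Rightarrow> bool" where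
  "ds_complete d \<longleftrightarrow> (\<forall>s :: nat \<Rightarrow> 'a.
     (\<forall>e>0. \<exists>N. \<forall>m\<ge>N. \<forall>n\<ge>N. sym_dist d (s m) (s n) < e) \<longrightarrow>
     (\<exists>x. \<forall>e>0. \<exists>N. \<forall>n\<ge>N. sym_dist d (s n) x < e))"

definition bicomplete :: "('a \<Rightarrow> 'a \<Rightarrow> real) \<Rightarrow> bool" where
  "bicomplete d \<longleftrightarrow> quasi_pseudometric d \<and> T0_qpm d \<and> ds_complete d"

definition dist_pt_set :: "('a \<Rightarrow> 'a \<Rightarrow> real) \<Rightarrow> 'a \<Rightarrow> 'a set \<Rightarrow> real" where
  "dist_pt_set d x A = (INF a\<in>A. d x a)"

definition dist_set_pt :: "('a \<Rightarrow> 'a \<Rightarrow> real) \<Rightarrow> 'a set \<Rightarrow> 'a \<Rightarrow> real" where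
  "dist_set_pt d A x = (INF a\<in>A. d a x)"

definition hausdorff_qpm :: "('a \<Rightarrow> 'a \<Rightarrow> real) \<Rightarrow> 'a set \<Rightarrow> 'a set \<Rightarrow> real" where
  "hausdorff_qpm d A B = max (SUP a\<in>A. dist_pt_set d a B) (SUP b\<in>B. dist_set_pt d A b)"

definition ds_bounded :: "('a \<Rightarrow> 'a \<Rightarrow> real) \<Rightarrow> 'a set \<Rightarrow> bool" where
  "ds_bounded d A \<longleftrightarrow> (\<exists>M. \<forall>a\<in>A. \<forall>b\<in>A. sym_dist d a b \<le> M)"

definition ds_closed :: "('a \<Rightarrow> 'a \<Rightarrow> real) \<Rightarrow> 'a set \<Rightarrow> bool" where
  "ds_closed d A \<longleftrightarrow> (\<forall>x. (\<forall>e>0. \<exists>a\<in>A. sym_dist d x a < e) \<longrightarrow> x \<in> A)"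

definition CB :: "('a \<Rightarrow> 'a \<Rightarrow> real) \<Rightarrow> 'a set set" where
  "CB d = {A. A \<noteq> {} \<and> ds_bounded d A \<and> ds_closed d A}"

definition ds_continuous :: "('a \<Rightarrow> 'a \<Rightarrow> real) \<Rightarrow> ('a \<Rightarrow> 'a) \<Rightarrow> bool" where
  "ds_continuous d J \<longleftrightarrow> (\<forall>x. \<forall>e>0. \<exists>\<delta>>0. \<forall>y. sym_dist d x y < \<delta> \<longrightarrow>
      sym_dist d (J x) (J y) < e)"

definition approx_mix_point :: "('a \<Rightarrow> 'a \<Rightarrow> real) \<Rightarrow> ('a \<Rightarrow> 'a) \<Rightarrow> ('a \<Rightarrow> 'a set) \<Rightarrow> bool" where
  "approx_mix_point d J F \<longleftrightarrow> (INF x. (SUP y\<in>F x. sym_dist d (J x) y)) = 0"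

end

theory Submission
  imports Defs
begin


lemma qpm: assumes "quasi_pseudometric d"
  shows "0 \<le> d x y" "d x x = 0" "d x z \<le> d x y + d y z"
  using assms unfolding quasi_pseudometric_def by blast+

lemma dsp: assumes "quasi_pseudometric d"
  shows "0 \<le> sym_dist d x y" "d x y \<le> sym_dist d x y" "d y x \<le> sym_dist d x y"
    "sym_dist d x y = sym_dist d y x" "sym_dist d x z \<le> sym_dist d x y + sym_dist d y z"
    "sym_dist d x x = 0"
proof -
  note q = qpm[OF assms]
  show "0 \<le> sym_dist d x y" "d x y \<le> sym_dist d x y" "d y x \<le> sym_dist d x y"
    "sym_dist d x y = sym_dist d y x" "sym_dist d x x = 0"
    using q unfolding sym_dist_def by (auto simp: le_max_iff_disj)
  have "d x z \<le> d x y + d y z" "d z x \<le> d z y + d y x" using q by auto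
  then show "sym_dist d x z \<le> sym_dist d x y + sym_dist d y z"
    unfolding sym_dist_def by linarith
qed

lemma pt_le: assumes "quasi_pseudometric d" "a \<in> A"
  shows "dist_pt_set d x A \<le> d x a"
  unfolding dist_pt_set_def
  by (rule cINF_lower[OF bdd_belowI2[where m=0]]) (use qpm[OF assms(1)] assms(2) in auto)

lemma pt_nonneg: assumes "quasi_pseudometric d" "A \<noteq> {}"
  shows "0 \<le> dist_pt_set d x A"
  unfolding dist_pt_set_def
  by (rule cINF_greatest) (use qpm[OF assms(1)] assms(2) in auto)

lemma pt_approx: assumes "quasi_pseudometric d" "A \<noteq> {}" "e > 0"
  shows "\<exists>a\<in>A. d x a < dist_pt_set d x A + e"
proof -
  have "bdd_below ((\<lambda>a. d x a) ` A)" by (rule bdd_belowI2[where m=0]) (use qpm[OF assms(1)] in auto)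
  moreover have "dist_pt_set d x A < dist_pt_set d x A + e" using assms by simp
  ultimately show ?thesis using cINF_less_iff[OF assms(2)] unfolding dist_pt_set_def by blast
qed

lemma set_pt_approx: assumes "quasi_pseudometric d" "A \<noteq> {}" "e > 0"
  shows "\<exists>a\<in>A. d a x < dist_set_pt d A x + e"
proof -
  have "bdd_below ((\<lambda>a. d a x) ` A)" by (rule bdd_belowI2[where m=0]) (use qpm[OF assms(1)] in auto)
  moreover have "dist_set_pt d A x < dist_set_pt d A x + e" using assms by simp
  ultimately show ?thesis using cINF_less_iff[OF assms(2)] unfolding dist_set_pt_def by blast
qed

lemma set_pt_le: assumes "quasi_pseudometric d" "a \<in> A"
  shows "dist_set_pt d A x \<le> d a x"
  unfolding dist_set_pt_def
  by (rule cINF_lower[OF bdd_belowI2[where m=0]]) (use qpm[OF assms(1)] assms(2) in auto)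

lemma haus1: assumes "quasi_pseudometric d" "A \<in> CB d" "B \<in> CB d" "a \<in> A"
  shows "dist_pt_set d a B \<le> hausdorff_qpm d A B"
proof -
  obtain M where M: "\<forall>a\<in>A. \<forall>b\<in>A. sym_dist d a b \<le> M"
    using assms(2) unfolding CB_def ds_bounded_def by blast
  obtain b0 where b0: "b0 \<in> B" using assms(3) unfolding CB_def by blast
  have "bdd_above ((\<lambda>a. dist_pt_set d a B) ` A)"
  proof (rule bdd_aboveI2[where M="M + d a b0"])
    fix x assume x: "x \<in> A"
    have "dist_pt_set d x B \<le> d x b0" by (rule pt_le[OF assms(1) b0])
    also have "\<dots> \<le> d x a + d a b0" using qpm[OF assms(1)] by blast
    also have "\<dots> \<le> M + d a b0" using order_trans[OF dsp(2)[OF assms(1), of x a]] M x assms(4) by simp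
    finally show "dist_pt_set d x B \<le> M + d a b0" .
  qed
  then have "dist_pt_set d a B \<le> (SUP a\<in>A. dist_pt_set d a B)" by (rule cSUP_upper[OF assms(4)])
  then show ?thesis unfolding hausdorff_qpm_def by simp
qed

lemma haus2: assumes "quasi_pseudometric d" "A \<in> CB d" "B \<in> CB d" "b \<in> B"
  shows "dist_set_pt d A b \<le> hausdorff_qpm d A B"
proof -
  obtain M where M: "\<forall>a\<in>B. \<forall>b\<in>B. sym_dist d a b \<le> M"
    using assms(3) unfolding CB_def ds_bounded_def by blast
  obtain a0 where a0: "a0 \<in> A" using assms(2) unfolding CB_def by blast
  have "bdd_above ((\<lambda>b. dist_set_pt d A b) ` B)"
  proof (rule bdd_aboveI2[where M="d a0 b + M"])
    fix x assume x: "x \<in> B"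
    have "dist_set_pt d A x \<le> d a0 x" by (rule set_pt_le[OF assms(1) a0])
    also have "\<dots> \<le> d a0 b + d b x" using qpm[OF assms(1)] by blast
    also have "\<dots> \<le> d a0 b + M" using order_trans[OF dsp(2)[OF assms(1), of b x]] M x assms(4) by simp
    finally show "dist_set_pt d A x \<le> d a0 b + M" .
  qed
  then have "dist_set_pt d A b \<le> (SUP b\<in>B. dist_set_pt d A b)" by (rule cSUP_upper[OF assms(4)])
  then show ?thesis unfolding hausdorff_qpm_def by simp
qed

lemma H1: assumes "quasi_pseudometric d" "A \<in> CB d" "B \<in> CB d" "a \<in> A" "e > 0"
  shows "\<exists>b\<in>B. d a b < hausdorff_qpm d A B + e"
proof -
  have "B \<noteq> {}" using assms(3) unfolding CB_def by blast
  from pt_approx[OF assms(1) this assms(5), of a] obtain b where "b \<in> B" "d a b < dist_pt_set d a B + e" by blast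
  with haus1[OF assms(1-4)] show ?thesis by (meson add_le_cancel_right less_le_trans)
qed

lemma H2: assumes "quasi_pseudometric d" "A \<in> CB d" "B \<in> CB d" "b \<in> B" "e > 0"
  shows "\<exists>a\<in>A. d a b < hausdorff_qpm d A B + e"
proof -
  have "A \<noteq> {}" using assms(2) unfolding CB_def by blast
  from set_pt_approx[OF assms(1) this assms(5), of b] obtain a where "a \<in> A" "d a b < dist_set_pt d A b + e" by blast
  with haus2[OF assms(1-4)] show ?thesis by (meson add_le_cancel_right less_le_trans)
qed

lemma mix: assumes "quasi_pseudometric d" "\<And>x. F x \<in> CB d" "approx_mix_point d J F" "e > 0"
  shows "\<exists>x. \<forall>y\<in>F x. sym_dist d (J x) y < e"
proof -
  define g where "g x = (SUP y\<in>F x. sym_dist d (J x) y)" for x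
  have bdd: "bdd_above ((\<lambda>y. sym_dist d (J x) y) ` F x)" for x
  proof -
    obtain M where M: "\<forall>a\<in>F x. \<forall>b\<in>F x. sym_dist d a b \<le> M"
      using assms(2)[of x] unfolding CB_def ds_bounded_def by blast
    obtain y0 where y0: "y0 \<in> F x" using assms(2)[of x] unfolding CB_def by blast
    show ?thesis
    proof (rule bdd_aboveI2[where M="sym_dist d (J x) y0 + M"])
      fix y assume "y \<in> F x"
      then show "sym_dist d (J x) y \<le> sym_dist d (J x) y0 + M"
        using M y0 dsp(5)[OF assms(1), where x="J x" and y=y0 and z=y] by force
    qed
  qed
  have "\<exists>x. g x < e"
  proof (rule ccontr)
    assume "\<not> ?thesis"
    then have "\<forall>x. e \<le> g x" using not_less by blast
    then have "e \<le> (INF x. g x)" by (intro cINF_greatest) blast+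
    moreover have "(INF x. g x) = 0" using assms(3) unfolding approx_mix_point_def g_def .
    ultimately show False using assms(4) by linarith
  qed
  then obtain x where "g x < e" by blast
  moreover have "\<forall>y\<in>F x. sym_dist d (J x) y \<le> g x"
    unfolding g_def using cSUP_upper[OF _ bdd] by blast
  ultimately show ?thesis using order_le_less_trans by blast
qed



theorem mainTheorem7:
  fixes d :: "'a \<Rightarrow> 'a \<Rightarrow> real" and J :: "'a \<Rightarrow> 'a" and F :: "'a \<Rightarrow> 'a set"
    and r \<alpha> :: real
  assumes "bicomplete d"
    and "ds_continuous d J"
    and "r > 0" and "\<And>x y. r * d x y \<le> d (J x) (J y)"
    and "\<And>x. F x \<in> CB d"
    and "0 < \<alpha>" and "\<alpha> < 1/2"
    and "\<And>x y. hausdorff_qpm d (F x) (F y)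
                 \<le> \<alpha> * (dist_pt_set d (J x) (F x) + dist_pt_set d (J y) (F y))"
    and "approx_mix_point d J F"
  shows "\<exists>x. J x \<in> F x"
proof -
  have q: "quasi_pseudometric d" and cpl: "ds_complete d"
    using assms(1) unfolding bicomplete_def by auto
  note Q = qpm[OF q] and DS = dsp[OF q]
  have Fne: "F z \<noteq> {}" for z using assms(5)[of z] unfolding CB_def by blast
  define \<delta> :: "nat \<Rightarrow> real" where "\<delta> n = 1 / (real n + 1)" for n
  have \<delta>pos: "\<delta> n > 0" for n unfolding \<delta>_def by simp
  have \<delta>small: "\<exists>N. \<forall>n\<ge>N. \<delta> n < e" if epos: "e > 0" for e
  proof -
    obtain N where N: "inverse (real (Suc N)) < e" using reals_Archimedean[OF epos] by blast
    have "\<delta> n < e" if "n \<ge> N" for n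
    proof -
      have "real N + 1 \<le> real n + 1" using that by simp
      then have "1 / (real n + 1) \<le> 1 / (real N + 1)" by (intro divide_left_mono) auto
      also have "1 / (real N + 1) = inverse (real (Suc N))" by (simp add: inverse_eq_divide)
      finally have "\<delta> n \<le> inverse (real (Suc N))" unfolding \<delta>_def .
      then show ?thesis using N by linarith
    qed
    then show ?thesis by blast
  qed
  have ex: "\<forall>n. \<exists>z. \<forall>y\<in>F z. sym_dist d (J z) y < \<delta> n"
    using mix[OF q assms(5) assms(9) \<delta>pos] by blast
  obtain x where x0: "\<forall>n. \<forall>y\<in>F (x n). sym_dist d (J (x n)) y < \<delta> n"
    using choice[OF ex] by blast
  have x: "sym_dist d (J (x n)) y < \<delta> n" if "y \<in> F (x n)" for n y using x0 that by blast
  have Dn: "dist_pt_set d (J (x n)) (F (x n)) \<le> \<delta> n" for n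
  proof -
    obtain y where y: "y \<in> F (x n)" using Fne by blast
    have "dist_pt_set d (J (x n)) (F (x n)) \<le> d (J (x n)) y" by (rule pt_le[OF q y])
    also have "\<dots> \<le> sym_dist d (J (x n)) y" by (rule DS(2))
    finally show ?thesis using x[OF y] by linarith
  qed
  have Dnn: "0 \<le> dist_pt_set d z (F w)" for z w using pt_nonneg[OF q Fne] .
  have Hn: "hausdorff_qpm d (F (x n)) (F (x m)) \<le> \<delta> n + \<delta> m" for n m
  proof -
    let ?A = "dist_pt_set d (J (x n)) (F (x n)) + dist_pt_set d (J (x m)) (F (x m))"
    have "\<alpha> * ?A \<le> ?A" by (rule mult_left_le_one_le) (use Dnn assms(6) assms(7) in auto)
    then show ?thesis using assms(8)[of "x n" "x m"] Dn[of n] Dn[of m] by linarith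
  qed
  have Jd: "d (J (x n)) (J (x m)) \<le> 2 * (\<delta> n + \<delta> m)" for n m
  proof (rule field_le_epsilon)
    fix e :: real assume e: "e > 0"
    obtain y where y: "y \<in> F (x n)" using Fne by blast
    obtain z where z: "z \<in> F (x m)" "d y z < hausdorff_qpm d (F (x n)) (F (x m)) + e"
      using H1[OF q assms(5) assms(5) y e] by blast
    have "d (J (x n)) (J (x m)) \<le> d (J (x n)) y + d y z + d z (J (x m))"
      using Q(3)[of "J (x n)" "J (x m)" y] Q(3)[of y "J (x m)" z] by linarith
    moreover have "d (J (x n)) y < \<delta> n" using DS(2) x[OF y] order_le_less_trans by blast
    moreover have "d z (J (x m)) < \<delta> m" using DS(3) x[OF z(1)] order_le_less_trans by blast
    ultimately show "d (J (x n)) (J (x m)) \<le> 2 * (\<delta> n + \<delta> m) + e"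
      using z(2) Hn[of n m] by (simp only: distrib_left mult_2)
  qed
  have xcauchy: "\<forall>e>0. \<exists>N. \<forall>m\<ge>N. \<forall>n\<ge>N. sym_dist d (x m) (x n) < e"
  proof (intro allI impI)
    fix e :: real assume e: "e > 0"
    define c where "c = r * e"
    have cpos: "c > 0" unfolding c_def using e assms(3) by simp
    obtain N where N: "\<And>n. n \<ge> N \<Longrightarrow> \<delta> n < c / 4"
      using \<delta>small[of "c / 4"] cpos by auto
    have "sym_dist d (x m) (x n) < e" if "m \<ge> N" "n \<ge> N" for m n
    proof -
      have "4 * \<delta> m < c" "4 * \<delta> n < c" using N[OF that(1)] N[OF that(2)] by simp_all
      then have b0: "2 * (\<delta> m + \<delta> n) < c" by (smt (verit))
      then have b: "2 * (\<delta> m + \<delta> n) < r * e" unfolding c_def .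
      have "r * d (x m) (x n) < r * e" using assms(4)[of "x m" "x n"] Jd[of m n] b by (smt (verit))
      then have 1: "d (x m) (x n) < e" using assms(3) by simp
      have "r * d (x n) (x m) < r * e" using assms(4)[of "x n" "x m"] Jd[of n m] b by (smt (verit))
      then have 2: "d (x n) (x m) < e" using assms(3) by simp
      show ?thesis using 1 2 unfolding sym_dist_def by simp
    qed
    then show "\<exists>N. \<forall>m\<ge>N. \<forall>n\<ge>N. sym_dist d (x m) (x n) < e" by blast
  qed
  then obtain xs where conv: "\<And>e. e > 0 \<Longrightarrow> \<exists>N. \<forall>n\<ge>N. sym_dist d (x n) xs < e"
    using cpl unfolding ds_complete_def by blast
  define p where "p = J xs"
  have Jconv: "\<exists>N. \<forall>n\<ge>N. sym_dist d p (J (x n)) < e" if e: "e > 0" for e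
  proof -
    obtain \<eta> where \<eta>: "\<eta> > 0" "\<And>y. sym_dist d xs y < \<eta> \<Longrightarrow> sym_dist d (J xs) (J y) < e"
      using assms(2) e unfolding ds_continuous_def by blast
    obtain N where N: "\<forall>n\<ge>N. sym_dist d (x n) xs < \<eta>" using conv[OF \<eta>(1)] by blast
    have "sym_dist d p (J (x n)) < e" if "n \<ge> N" for n
      unfolding p_def using \<eta>(2)[of "x n"] N that DS(4)[of xs "x n"] by simp
    then show ?thesis by blast
  qed
  have comb: "\<exists>n. sym_dist d p (J (x n)) < e \<and> \<delta> n < e" if e: "e > 0" for e
  proof -
    obtain N1 where N1: "\<forall>n\<ge>N1. sym_dist d p (J (x n)) < e" using Jconv[OF e] by blast
    obtain N2 where N2: "\<forall>n\<ge>N2. \<delta> n < e" using \<delta>small[OF e] by blast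
    show ?thesis using N1 N2 by (meson max.cobounded1 max.cobounded2)
  qed
  define D where "D = dist_pt_set d p (F xs)"
  have D0: "D = 0"
  proof -
    have key: "(1 - \<alpha>) * D \<le> 4 * e" if e: "e > 0" for e
    proof -
      obtain n where n: "sym_dist d p (J (x n)) < e" "\<delta> n < e" using comb[OF e] by blast
      obtain y where y: "y \<in> F (x n)" using Fne by blast
      obtain a where a: "a \<in> F xs" "d y a < hausdorff_qpm d (F (x n)) (F xs) + e"
        using H1[OF q assms(5) assms(5) y e] by blast
      have h: "hausdorff_qpm d (F (x n)) (F xs) \<le> \<delta> n + \<alpha> * D"
      proof -
        have "\<alpha> * dist_pt_set d (J (x n)) (F (x n)) \<le> dist_pt_set d (J (x n)) (F (x n))"
          by (rule mult_left_le_one_le) (use Dnn assms(6) assms(7) in auto)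
        then show ?thesis using assms(8)[of "x n" xs] Dn[of n] unfolding D_def p_def
          by (simp add: distrib_left)
      qed
      have "D \<le> d p a" unfolding D_def by (rule pt_le[OF q a(1)])
      also have "\<dots> \<le> d p (J (x n)) + d (J (x n)) y + d y a"
        using Q(3)[of p a "J (x n)"] Q(3)[of "J (x n)" a y] by linarith
      finally have "D \<le> d p (J (x n)) + d (J (x n)) y + d y a" .
      moreover have "d p (J (x n)) < e" using DS(2) n(1) order_le_less_trans by blast
      moreover have "d (J (x n)) y < \<delta> n" using DS(2) x[OF y] order_le_less_trans by blast
      ultimately show ?thesis using a(2) h n(2) by (simp add: algebra_simps)
    qed
    have "D \<ge> 0" unfolding D_def by (rule Dnn)
    moreover have "\<not> D > 0"
    proof
      assume Dp: "D > 0"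
      then have "(1 - \<alpha>) * D > 0" using assms(7) by simp
      then have "(1 - \<alpha>) * D \<le> 4 * ((1 - \<alpha>) * D / 8)" by (intro key) simp
      then show False using \<open>(1 - \<alpha>) * D > 0\<close> by (auto simp: mult.commute)
    qed
    ultimately show ?thesis by linarith
  qed
  have Za: "d a p \<le> 0" if a: "a \<in> F xs" for a
  proof (rule field_le_epsilon)
    fix e :: real assume e: "e > 0"
    then have e4: "e / 4 > 0" by simp
    obtain n where n: "sym_dist d p (J (x n)) < e / 4" "\<delta> n < e / 4" using comb[OF e4] by blast
    obtain y where y: "y \<in> F (x n)" "d a y < hausdorff_qpm d (F xs) (F (x n)) + e / 4"
      using H1[OF q assms(5) assms(5) a e4] by blast
    have h: "hausdorff_qpm d (F xs) (F (x n)) \<le> \<delta> n"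
    proof -
      have "\<alpha> * dist_pt_set d (J (x n)) (F (x n)) \<le> dist_pt_set d (J (x n)) (F (x n))"
        by (rule mult_left_le_one_le) (use Dnn assms(6) assms(7) in auto)
      then show ?thesis using assms(8)[of xs "x n"] Dn[of n] D0 unfolding D_def p_def
        by (simp add: distrib_left)
    qed
    have "d a p \<le> d a y + d y (J (x n)) + d (J (x n)) p"
      using Q(3)[of a p y] Q(3)[of y p "J (x n)"] by linarith
    moreover have "d y (J (x n)) < \<delta> n" using DS(3) x[OF y(1)] order_le_less_trans by blast
    moreover have "d (J (x n)) p < e / 4" using DS(3) n(1) order_le_less_trans by blast
    ultimately show "d a p \<le> 0 + e" using y(2) h n(2) by linarith
  qed
  have "\<forall>e>0. \<exists>a\<in>F xs. sym_dist d p a < e"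
  proof (intro allI impI)
    fix e :: real assume e: "e > 0"
    obtain a where a: "a \<in> F xs" "d p a < D + e"
      using pt_approx[OF q Fne e] unfolding D_def by blast
    have "sym_dist d p a < e" using a(2) D0 Za[OF a(1)] e unfolding sym_dist_def by simp
    then show "\<exists>a\<in>F xs. sym_dist d p a < e" using a(1) by blast
  qed
  then have "p \<in> F xs" using assms(5)[of xs] unfolding CB_def ds_closed_def by blast
  then show ?thesis unfolding p_def by blast
qed

end
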